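(* Let $f(x,y)=(x,y)$ be the identity function. Any protocol with a fixed order of speaking that computes $f$ over a feedback channel succeeds with probability at most $1/2$ when $1/4$ of the transmissions are corrupted; that is, there are inputs and an adversarial corruption pattern corrupting at most a $1/4$-fraction of the transmissions under which the protocol outputs the correct value with probability at most $1/2$.
   Context: Alice holds $x$ and Bob holds $y$; in each round exactly one party sends one symbol over the channel, and both parties must output $f(x,y)$. A feedback channel is a channel $\Sigma\to\Sigma$ (for some alphabet $\Sigma$) in which the adversary may change any transmitted symbol into any other symbol, and the sender learns, via a noiseless feedback, the (possibly corrupted) symbol received by the other party. A protocol has a fixed order of speaking if there is a function $g:\mathbb{N}\to\{\text{Alice},\text{Bob}\}$ such that the speaker at round $i$ is $g(i)$, independent of inputs and noise; the protocol runs a fixed number of rounds. *)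

theory Defs
  imports "HOL-Probability.Probability"
begin

(* - 'x, 'y   : input types of Alice and Bob
   - 's       : channel alphabet Sigma
   - 'ra, 'rb : private random strings of Alice and Bob (drawn independently)
   - spk i    : True iff Alice speaks at round i (fixed order of speaking, i = 0,1,...)
   - msgA x ra rcv : symbol Alice sends when it is her turn; rcv is the list of symbols
                     received so far over the whole run (thanks to the noiseless feedback,
                     both parties know the full received transcript); its length is the
                     current round number.
   - msgB y rb rcv : likewise for Bob.
   - adv hist s : adaptive adversary: sees the whole history of (sent, received) pairs and
                  the currently sent symbol s, and decides the received symbol.
*)

fun exec ::
  "(nat \<Rightarrow> bool) \<Rightarrow> ('x \<Rightarrow> 'ra \<Rightarrow> 's list \<Rightarrow> 's) \<Rightarrow> ('y \<Rightarrow> 'rb \<Rightarrow> 's list \<Rightarrow> 's)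
   \<Rightarrow> (('s \<times> 's) list \<Rightarrow> 's \<Rightarrow> 's) \<Rightarrow> 'x \<Rightarrow> 'y \<Rightarrow> 'ra \<Rightarrow> 'rb \<Rightarrow> nat \<Rightarrow> ('s \<times> 's) list"
where
  "exec spk msgA msgB adv x y ra rb 0 = []"
| "exec spk msgA msgB adv x y ra rb (Suc i) =
     (let h = exec spk msgA msgB adv x y ra rb i;
          s = (if spk i then msgA x ra (map snd h) else msgB y rb (map snd h))
      in h @ [(s, adv h s)])"

definition corruptions :: "('s \<times> 's) list \<Rightarrow> nat" where
  "corruptions h = length (filter (\<lambda>(s, r). s \<noteq> r) h)"

definition success ::
  "(nat \<Rightarrow> bool) \<Rightarrow> ('x \<Rightarrow> 'ra \<Rightarrow> 's list \<Rightarrow> 's) \<Rightarrow> ('y \<Rightarrow> 'rb \<Rightarrow> 's list \<Rightarrow> 's)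
   \<Rightarrow> ('x \<Rightarrow> 'ra \<Rightarrow> 's list \<Rightarrow> 'x \<times> 'y) \<Rightarrow> ('y \<Rightarrow> 'rb \<Rightarrow> 's list \<Rightarrow> 'x \<times> 'y)
   \<Rightarrow> nat \<Rightarrow> (('s \<times> 's) list \<Rightarrow> 's \<Rightarrow> 's) \<Rightarrow> 'x \<Rightarrow> 'y \<Rightarrow> 'ra \<Rightarrow> 'rb \<Rightarrow> bool"
where
  "success spk msgA msgB outA outB n adv x y ra rb =
     (let rcv = map snd (exec spk msgA msgB adv x y ra rb n)
      in outA x ra rcv = (x, y) \<and> outB y rb rcv = (x, y))"

end

theory Submission
  imports Defs
begin

lemma prob_bind_pmf: "measure_pmf.prob (bind_pmf M N) X = (\<integral>x. measure_pmf.prob (N x) X \<partial>M)"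
proof -
  have int: "integrable (measure_pmf M) (\<lambda>x. measure_pmf.prob (N x) X)"
    by (rule measure_pmf.integrable_const_bound[where B=1]) auto
  have "emeasure (measure_pmf (bind_pmf M N)) X = (\<integral>\<^sup>+x. emeasure (N x) X \<partial>M)"
    by (rule emeasure_bind_pmf)
  also have "\<dots> = (\<integral>\<^sup>+x. ennreal (measure_pmf.prob (N x) X) \<partial>M)"
    by (simp add: measure_pmf.emeasure_eq_measure)
  also have "\<dots> = ennreal (\<integral>x. measure_pmf.prob (N x) X \<partial>M)"
    by (rule nn_integral_eq_integral[OF int]) auto
  finally show ?thesis
    by (simp add: measure_pmf.emeasure_eq_measure)
qed

lemma exists_le_mean:
  fixes f :: "'a \<Rightarrow> real"
  assumes "\<And>x. 0 \<le> f x" "\<And>x. f x \<le> 1" "(\<integral>x. f x \<partial>measure_pmf M) \<le> c"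
  shows "\<exists>x. f x \<le> c"
proof (rule ccontr)
  assume "\<not> ?thesis"
  hence g: "\<And>x. c < f x" by (meson not_le)
  have int: "integrable (measure_pmf M) f"
    by (rule measure_pmf.integrable_const_bound[where B=1]) (use assms in auto)
  have int2: "integrable (measure_pmf M) (\<lambda>x. f x - c)" using int by simp
  have "(\<integral>x. f x - c \<partial>measure_pmf M) = (\<integral>x. f x \<partial>measure_pmf M) - c"
    using int by (simp add: measure_pmf.prob_space)
  moreover have "(\<integral>x. f x - c \<partial>measure_pmf M) \<ge> 0"
    using g by (intro integral_nonneg_AE) (auto simp: less_imp_le)
  ultimately have "(\<integral>x. f x - c \<partial>measure_pmf M) = 0" using assms(3) by linarith
  hence "AE x in measure_pmf M. f x - c = 0"
    using integral_nonneg_eq_0_iff_AE[OF int2] g by (auto simp: less_imp_le)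
  hence "\<forall>x\<in>set_pmf M. f x - c = 0" by (simp add: AE_measure_pmf_iff)
  moreover obtain x where "x \<in> set_pmf M" using set_pmf_not_empty[of M] by blast
  ultimately show False using g by fastforce
qed

fun Gr :: "(nat \<Rightarrow> bool) \<Rightarrow> ('x \<Rightarrow> 'ra \<Rightarrow> 's list \<Rightarrow> 's) \<Rightarrow> ('y \<Rightarrow> 'rb \<Rightarrow> 's list \<Rightarrow> 's)
   \<Rightarrow> nat \<Rightarrow> 'x \<Rightarrow> 'x \<Rightarrow> 'y \<Rightarrow> 'ra \<Rightarrow> 'ra \<Rightarrow> 'rb \<Rightarrow> nat \<Rightarrow> 's list" where
  "Gr spk msgA msgB m x0 x1 y u v rb 0 = []"
| "Gr spk msgA msgB m x0 x1 y u v rb (Suc i) =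
     (let r = Gr spk msgA msgB m x0 x1 y u v rb i in
      r @ [if spk i then (if i < m then msgA x0 u r else msgA x1 v r) else msgB y rb r])"

lemma exec_length: "length (exec spk msgA msgB adv x y ra rb i) = i"
  by (induction i) (simp_all add: Let_def)

lemma exec_A:
  "map snd (exec spk msgA msgB (\<lambda>h s. if spk (length h) \<and> m \<le> length h then msgA xb v (map snd h) else s) xa y u rb i)
   = Gr spk msgA msgB m xa xb y u v rb i"
  by (induction i) (simp_all add: Let_def exec_length)

lemma exec_B:
  "map snd (exec spk msgA msgB (\<lambda>h s. if spk (length h) \<and> length h < m then msgA xa u (map snd h) else s) xb y v rb i)
   = Gr spk msgA msgB m xa xb y u v rb i"
  by (induction i) (simp_all add: Let_def exec_length)

lemma exec_swap:
  "exec (\<lambda>i. \<not> spk i) msgB msgA adv y x rb ra i = exec spk msgA msgB adv x y ra rb i"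
  by (induction i) (simp_all add: Let_def)

lemma corr_bound:
  assumes "\<forall>h s. \<not> P (length h) \<longrightarrow> adv h s = s"
  shows "corruptions (exec spk msgA msgB adv x y ra rb n) \<le> card {i. i < n \<and> P i}"
proof (induction n)
  case 0
  then show ?case by (simp add: corruptions_def)
next
  case (Suc n)
  define h where "h = exec spk msgA msgB adv x y ra rb n"
  define s where "s = (if spk n then msgA x ra (map snd h) else msgB y rb (map snd h))"
  have lh: "length h = n" by (simp add: h_def exec_length)
  have e: "exec spk msgA msgB adv x y ra rb (Suc n) = h @ [(s, adv h s)]"
    by (simp add: h_def s_def Let_def)
  have c: "corruptions (h @ [(s, adv h s)]) = corruptions h + (if s \<noteq> adv h s then 1 else 0)"
    by (simp add: corruptions_def)
  show ?case
  proof (cases "P n")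
    case True
    have "{i. i < Suc n \<and> P i} = insert n {i. i < n \<and> P i}" using True by auto
    hence "card {i. i < Suc n \<and> P i} = Suc (card {i. i < n \<and> P i})" by simp
    then show ?thesis using Suc e c h_def by simp
  next
    case False
    have "{i. i < Suc n \<and> P i} = {i. i < n \<and> P i}" using False by (auto simp: less_Suc_eq)
    moreover have "adv h s = s" using assms False lh by auto
    ultimately show ?thesis using Suc e c h_def by simp
  qed
qed

lemma finlt: "finite {i. i < (n::nat) \<and> Q i}"
  by (rule finite_subset[of _ "{..<n}"]) auto

lemma cut_exists:
  fixes n c :: nat
  assumes "card {i. i < n \<and> P i} \<le> 2 * c"
  shows "\<exists>m. card {i. i < n \<and> P i \<and> i < m} \<le> c \<and> card {i. i < n \<and> P i \<and> \<not> i < m} \<le> c"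
proof -
  define g where "g m = card {i. i < n \<and> P i \<and> i < m}" for m
  have split: "card {i. i < n \<and> P i} = g m + card {i. i < n \<and> P i \<and> \<not> i < m}" for m
  proof -
    have "{i. i < n \<and> P i} = {i. i < n \<and> P i \<and> i < m} \<union> {i. i < n \<and> P i \<and> \<not> i < m}" by auto
    moreover have "card ({i. i < n \<and> P i \<and> i < m} \<union> {i. i < n \<and> P i \<and> \<not> i < m})
        = card {i. i < n \<and> P i \<and> i < m} + card {i. i < n \<and> P i \<and> \<not> i < m}"
      by (rule card_Un_disjoint[OF finlt[of n "\<lambda>i. P i \<and> i < m"] finlt[of n "\<lambda>i. P i \<and> \<not> i < m"]]) auto
    ultimately show ?thesis by (simp add: g_def)
  qed
  have step: "g (Suc m) \<le> Suc (g m)" for m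
  proof -
    have fin: "finite {i. i < n \<and> P i \<and> i < m}" by (rule finite_subset[of _ "{..<n}"]) auto
    have "{i. i < n \<and> P i \<and> i < Suc m} \<subseteq> insert m {i. i < n \<and> P i \<and> i < m}" by auto
    hence "g (Suc m) \<le> card (insert m {i. i < n \<and> P i \<and> i < m})"
      unfolding g_def by (rule card_mono[rotated]) (simp add: fin)
    also have "\<dots> \<le> Suc (g m)" unfolding g_def using fin by (simp add: card_insert_if)
    finally show ?thesis .
  qed
  have ivt: "\<forall>k \<le> g m. \<exists>m'. g m' = k" for m
  proof (induction m)
    case 0
    have "g 0 = 0" by (simp add: g_def)
    then show ?case by auto
  next
    case (Suc m)
    show ?case
    proof (intro allI impI)
      fix k assume k: "k \<le> g (Suc m)"
      show "\<exists>m'. g m' = k"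
      proof (cases "k \<le> g m")
        case True
        then show ?thesis using Suc.IH by blast
      next
        case False
        hence "k = g (Suc m)" using k step[of m] by linarith
        then show ?thesis by blast
      qed
    qed
  qed
  have gn: "g n = card {i. i < n \<and> P i}" unfolding g_def by (rule arg_cong[where f=card]) auto
  show ?thesis
  proof (cases "card {i. i < n \<and> P i} \<le> c")
    case True
    have e: "{i. i < n \<and> P i \<and> \<not> i < n} = {}" by auto
    have "card {i. i < n \<and> P i \<and> i < n} \<le> c" using True gn unfolding g_def by simp
    then show ?thesis by (intro exI[of _ n]) (simp only: e card.empty, simp)
  next
    case False
    then obtain m where gm: "g m = c" using ivt[of n] gn by force
    have "card {i. i < n \<and> P i \<and> \<not> i < m} \<le> c" using split[of m] assms gm by linarith
    moreover have "card {i. i < n \<and> P i \<and> i < m} \<le> c" using gm unfolding g_def by simp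
    ultimately show ?thesis by blast
  qed
qed

lemma core:
  fixes spk :: "nat \<Rightarrow> bool"
    and msgA :: "'x \<Rightarrow> 'ra \<Rightarrow> 's list \<Rightarrow> 's"
    and msgB :: "'y \<Rightarrow> 'rb \<Rightarrow> 's list \<Rightarrow> 's"
    and outA :: "'x \<Rightarrow> 'ra \<Rightarrow> 's list \<Rightarrow> 'x \<times> 'y"
    and outB :: "'y \<Rightarrow> 'rb \<Rightarrow> 's list \<Rightarrow> 'x \<times> 'y"
    and PA :: "'ra pmf" and PB :: "'rb pmf"
    and n :: nat
  assumes x01: "x0 \<noteq> (x1 :: 'x)"
    and cb: "card {i. i < n \<and> spk i \<and> i < m} \<le> c"
    and ca: "card {i. i < n \<and> spk i \<and> \<not> i < m} \<le> c"
  shows "\<exists>x y adv.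
           (\<forall>ra rb. corruptions (exec spk msgA msgB adv x y ra rb n) \<le> c) \<and>
           measure_pmf.prob (pair_pmf PA PB)
             {(ra, rb). success spk msgA msgB outA outB n adv x y ra rb} \<le> 1 / 2"
proof -
  define y where "y = (undefined :: 'y)"
  define G where "G u v rb = Gr spk msgA msgB m x0 x1 y u v rb n" for u v rb
  define advA where "advA v = (\<lambda>(h :: ('s \<times> 's) list) s. if spk (length h) \<and> m \<le> length h then msgA x1 v (map snd h) else s)" for v
  define advB where "advB u = (\<lambda>(h :: ('s \<times> 's) list) s. if spk (length h) \<and> length h < m then msgA x0 u (map snd h) else s)" for u
  define E0 where "E0 = {(u, v, rb). outB y rb (G u v rb) = (x0, y)}"
  define E1 where "E1 = {(u, v, rb). outB y rb (G u v rb) = (x1, y)}"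
  define fA where "fA v = measure_pmf.prob (pair_pmf PA PB) {(u, rb). (u, v, rb) \<in> E0}" for v
  define fB where "fB u = measure_pmf.prob (pair_pmf PA PB) {(v, rb). (u, v, rb) \<in> E1}" for u
  define R where "R = bind_pmf PA (\<lambda>u. bind_pmf PA (\<lambda>v. bind_pmf PB (\<lambda>rb. return_pmf (u, v, rb))))"
  have R2: "R = bind_pmf PA (\<lambda>v. bind_pmf PA (\<lambda>u. bind_pmf PB (\<lambda>rb. return_pmf (u, v, rb))))"
    unfolding R_def by (rule bind_commute_pmf)
  have inA: "bind_pmf PA (\<lambda>u. bind_pmf PB (\<lambda>rb. return_pmf (u, v, rb)))
      = map_pmf (\<lambda>(u, rb). (u, v, rb)) (pair_pmf PA PB)" for v
    by (simp add: pair_pmf_def map_bind_pmf)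
  have inB: "bind_pmf PA (\<lambda>v. bind_pmf PB (\<lambda>rb. return_pmf (u, v, rb)))
      = map_pmf (\<lambda>(v, rb). (u, v, rb)) (pair_pmf PA PB)" for u
    by (simp add: pair_pmf_def map_bind_pmf)
  have IA: "(\<integral>v. fA v \<partial>measure_pmf PA) = measure_pmf.prob R E0"
  proof -
    have "measure_pmf.prob R E0 = (\<integral>v. measure_pmf.prob (map_pmf (\<lambda>(u, rb). (u, v, rb)) (pair_pmf PA PB)) E0 \<partial>measure_pmf PA)"
      unfolding R2 prob_bind_pmf inA ..
    also have "\<dots> = (\<integral>v. fA v \<partial>measure_pmf PA)"
      unfolding fA_def measure_map_pmf
      by (intro Bochner_Integration.integral_cong refl arg_cong[where f="measure_pmf.prob (pair_pmf PA PB)"]) auto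
    finally show ?thesis ..
  qed
  have IB: "(\<integral>u. fB u \<partial>measure_pmf PA) = measure_pmf.prob R E1"
  proof -
    have "measure_pmf.prob R E1 = (\<integral>u. measure_pmf.prob (map_pmf (\<lambda>(v, rb). (u, v, rb)) (pair_pmf PA PB)) E1 \<partial>measure_pmf PA)"
      unfolding R_def prob_bind_pmf inB ..
    also have "\<dots> = (\<integral>u. fB u \<partial>measure_pmf PA)"
      unfolding fB_def measure_map_pmf
      by (intro Bochner_Integration.integral_cong refl arg_cong[where f="measure_pmf.prob (pair_pmf PA PB)"]) auto
    finally show ?thesis ..
  qed
  have disj: "E0 \<inter> E1 = {}" using x01 unfolding E0_def E1_def by auto
  have "measure_pmf.prob R E0 + measure_pmf.prob R E1 = measure_pmf.prob R (E0 \<union> E1)"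
    using disj by (intro measure_pmf.finite_measure_Union[symmetric]) auto
  also have "\<dots> \<le> 1" by simp
  finally have sum1: "(\<integral>v. fA v \<partial>measure_pmf PA) + (\<integral>u. fB u \<partial>measure_pmf PA) \<le> 1"
    using IA IB by simp
  show ?thesis
  proof (cases "(\<integral>v. fA v \<partial>measure_pmf PA) \<le> 1 / 2")
    case True
    then obtain v where v: "fA v \<le> 1 / 2"
      using exists_le_mean[of fA PA "1/2"] unfolding fA_def by auto
    have corr: "corruptions (exec spk msgA msgB (advA v) x0 y ra rb n) \<le> c" for ra rb
    proof -
      have "corruptions (exec spk msgA msgB (advA v) x0 y ra rb n) \<le> card {i. i < n \<and> (spk i \<and> \<not> i < m)}"
        by (rule corr_bound) (auto simp: advA_def)
      then show ?thesis using ca by simp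
    qed
    have pt: "(ra, v, rb) \<in> E0" if "success spk msgA msgB outA outB n (advA v) x0 y ra rb" for ra rb
      using that exec_A[where spk=spk and msgA=msgA and msgB=msgB and m=m and xb=x1 and v=v and xa=x0 and y=y and u=ra and rb=rb and i=n]
      unfolding success_def Let_def E0_def G_def advA_def by simp
    have "measure_pmf.prob (pair_pmf PA PB) {(ra, rb). success spk msgA msgB outA outB n (advA v) x0 y ra rb}
        \<le> fA v"
      unfolding fA_def
      by (rule measure_pmf.finite_measure_mono) (use pt in auto)
    then show ?thesis using v corr by (intro exI[of _ x0] exI[of _ y] exI[of _ "advA v"]) auto
  next
    case False
    hence "(\<integral>u. fB u \<partial>measure_pmf PA) \<le> 1 / 2" using sum1 by linarith
    then obtain u where u: "fB u \<le> 1 / 2"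
      using exists_le_mean[of fB PA "1/2"] unfolding fB_def by auto
    have corr: "corruptions (exec spk msgA msgB (advB u) x1 y ra rb n) \<le> c" for ra rb
    proof -
      have "corruptions (exec spk msgA msgB (advB u) x1 y ra rb n) \<le> card {i. i < n \<and> (spk i \<and> i < m)}"
        by (rule corr_bound) (auto simp: advB_def)
      then show ?thesis using cb by simp
    qed
    have pt: "(u, v, rb) \<in> E1" if "success spk msgA msgB outA outB n (advB u) x1 y v rb" for v rb
      using that exec_B[where spk=spk and msgA=msgA and msgB=msgB and m=m and xb=x1 and v=v and xa=x0 and y=y and u=u and rb=rb and i=n]
      unfolding success_def Let_def E1_def G_def advB_def by simp
    have "measure_pmf.prob (pair_pmf PA PB) {(ra, rb). success spk msgA msgB outA outB n (advB u) x1 y ra rb}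
        \<le> fB u"
      unfolding fB_def
      by (rule measure_pmf.finite_measure_mono) (use pt in auto)
    then show ?thesis using u corr by (intro exI[of _ x1] exI[of _ y] exI[of _ "advB u"]) auto
  qed
qed

lemma four_c: "real n \<le> 4 * real (nat \<lceil>real n / 4\<rceil>)"
proof -
  have "real n / 4 \<le> real_of_int \<lceil>real n / 4\<rceil>" by (rule le_of_int_ceiling)
  moreover have "real_of_int \<lceil>real n / 4\<rceil> = real (nat \<lceil>real n / 4\<rceil>)"
    by (simp add: of_nat_nat)
  ultimately show ?thesis by linarith
qed

theorem mainTheorem2:
  fixes spk :: "nat \<Rightarrow> bool"
    and msgA :: "'x \<Rightarrow> 'ra \<Rightarrow> 's list \<Rightarrow> 's"
    and msgB :: "'y \<Rightarrow> 'rb \<Rightarrow> 's list \<Rightarrow> 's"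
    and outA :: "'x \<Rightarrow> 'ra \<Rightarrow> 's list \<Rightarrow> 'x \<times> 'y"
    and outB :: "'y \<Rightarrow> 'rb \<Rightarrow> 's list \<Rightarrow> 'x \<times> 'y"
    and PA :: "'ra pmf" and PB :: "'rb pmf"
    and n :: nat
  assumes "\<exists>x1 x2 :: 'x. x1 \<noteq> x2"
    and "\<exists>y1 y2 :: 'y. y1 \<noteq> y2"
  shows "\<exists>x y adv.
           (\<forall>ra rb. corruptions (exec spk msgA msgB adv x y ra rb n) \<le> nat \<lceil>real n / 4\<rceil>) \<and>
           measure_pmf.prob (pair_pmf PA PB)
             {(ra, rb). success spk msgA msgB outA outB n adv x y ra rb} \<le> 1 / 2"
proof -
  define c where "c = nat \<lceil>real n / 4\<rceil>"
  have c4: "n \<le> 4 * c" using four_c[of n] unfolding c_def by linarith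
  have ab: "card {i. i < n \<and> spk i} + card {i. i < n \<and> \<not> spk i} = n"
  proof -
    have "card ({i. i < n \<and> spk i} \<union> {i. i < n \<and> \<not> spk i}) = card {i. i < n \<and> spk i} + card {i. i < n \<and> \<not> spk i}"
      by (rule card_Un_disjoint[OF finlt[of n spk] finlt[of n "\<lambda>i. \<not> spk i"]]) auto
    moreover have "{i. i < n \<and> spk i} \<union> {i. i < n \<and> \<not> spk i} = {..<n}" by auto
    ultimately show ?thesis by simp
  qed
  show ?thesis
  proof (cases "card {i. i < n \<and> spk i} \<le> 2 * c")
    case True
    then obtain m where m: "card {i. i < n \<and> spk i \<and> i < m} \<le> c" "card {i. i < n \<and> spk i \<and> \<not> i < m} \<le> c"
      using cut_exists[of n spk c] by blast
    obtain x0 x1 :: 'x where "x0 \<noteq> x1" using assms(1) by blast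
    from core[OF this m, where msgA=msgA and msgB=msgB and outA=outA and outB=outB and PA=PA and PB=PB] show ?thesis unfolding c_def .
  next
    case False
    hence "card {i. i < n \<and> \<not> spk i} \<le> 2 * c" using ab c4 by linarith
    then obtain m where m: "card {i. i < n \<and> \<not> spk i \<and> i < m} \<le> c" "card {i. i < n \<and> \<not> spk i \<and> \<not> i < m} \<le> c"
      using cut_exists[of n "\<lambda>i. \<not> spk i" c] by blast
    obtain y0 y1 :: 'y where "y0 \<noteq> y1" using assms(2) by blast
    from core[OF this m, where msgA=msgB and msgB=msgA and outA="\<lambda>y rb r. prod.swap (outB y rb r)" and outB="\<lambda>x ra r. prod.swap (outA x ra r)" and PA=PB and PB=PA]
    obtain y x adv where
      corr: "\<forall>rb ra. corruptions (exec (\<lambda>i. \<not> spk i) msgB msgA adv y x rb ra n) \<le> c" and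
      pr: "measure_pmf.prob (pair_pmf PB PA)
             {(rb, ra). success (\<lambda>i. \<not> spk i) msgB msgA (\<lambda>y rb r. prod.swap (outB y rb r))
                 (\<lambda>x ra r. prod.swap (outA x ra r)) n adv y x rb ra} \<le> 1 / 2"
      by blast
    have sw: "success (\<lambda>i. \<not> spk i) msgB msgA (\<lambda>y rb r. prod.swap (outB y rb r))
                 (\<lambda>x ra r. prod.swap (outA x ra r)) n adv y x rb ra
          = success spk msgA msgB outA outB n adv x y ra rb" for ra rb
      unfolding success_def Let_def exec_swap
      by (cases "outA x ra (map snd (exec spk msgA msgB adv x y ra rb n))";
          cases "outB y rb (map snd (exec spk msgA msgB adv x y ra rb n))") auto
    have "measure_pmf.prob (pair_pmf PA PB) {(ra, rb). success spk msgA msgB outA outB n adv x y ra rb}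
        = measure_pmf.prob (pair_pmf PB PA)
             {(rb, ra). success (\<lambda>i. \<not> spk i) msgB msgA (\<lambda>y rb r. prod.swap (outB y rb r))
                 (\<lambda>x ra r. prod.swap (outA x ra r)) n adv y x rb ra}"
      unfolding pair_commute_pmf[of PA PB] measure_map_pmf sw
      by (intro arg_cong[where f="measure_pmf.prob (pair_pmf PB PA)"]) auto
    moreover have "\<forall>ra rb. corruptions (exec spk msgA msgB adv x y ra rb n) \<le> c"
      using corr by (simp add: exec_swap)
    ultimately show ?thesis using pr unfolding c_def
      by (intro exI[of _ x] exI[of _ y] exI[of _ adv]) simp
  qed
qed

end
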